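(* Let $\alpha\in\mathbb{N}$, let $n\in\mathbb{N}$ with $3\nmid n$ and $n>6\alpha+3$, and let $\mathbb{S}=\langle 6,6\alpha+3,n\rangle$, with Betti elements $\beta_1=\beta_2=12\alpha+6$ and $\beta_3=3n$. Then, with respect to $(6,6\alpha+3,n)$, the factorizations of $\beta_1=\beta_2$ are exactly $(2\alpha+1,0,0)$ and $(0,2,0)$, and the factorizations of $\beta_3$ are exactly $(0,0,3)$ and $\left(\frac{n-k(2\alpha+1)}{2},k,0\right)$ for $k\in\mathbb{N}$ with $k\le\frac{n}{2\alpha+1}$ and $2\mid n-k(2\alpha+1)$.
   Context: $\mathbb{N}=\{0,1,2,\dots\}$. $\langle a_1,\dots,a_e\rangle$ is the set of $\mathbb{N}$-linear combinations of $a_1,\dots,a_e$. A factorization of $a\in\langle a_1,a_2,a_3\rangle$ is a tuple $(\eta_1,\eta_2,\eta_3)\in\mathbb{N}^3$ with $\eta_1a_1+\eta_2a_2+\eta_3a_3=a$. *)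

theory Defs
  imports Main
begin

definition factorizations :: "nat \<Rightarrow> nat \<Rightarrow> nat \<Rightarrow> nat \<Rightarrow> (nat \<times> nat \<times> nat) set" where
  "factorizations a1 a2 a3 a =
     {(e1, e2, e3). e1 * a1 + e2 * a2 + e3 * a3 = a}"

end

theory Submission
  imports Defs
begin

lemma part1:
  fixes \<alpha> n e1 e2 e3 :: nat
  assumes "\<not> (3 dvd n)" and "n > 6 * \<alpha> + 3"
    and eq: "e1 * 6 + e2 * (6 * \<alpha> + 3) + e3 * n = 12 * \<alpha> + 6"
  shows "(e1, e2, e3) = (2 * \<alpha> + 1, 0, 0) \<or> (e1, e2, e3) = (0, 2, 0)"
proof -
  have "e3 < 2"
  proof (rule ccontr)
    assume "\<not> e3 < 2"
    then have "e3 * n \<ge> 2 * n" by simp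
    then show False using eq assms(2) by linarith
  qed
  then consider "e3 = 0" | "e3 = 1" by linarith
  then show ?thesis
  proof cases
    case 1
    have "e2 < 3"
    proof (rule ccontr)
      assume "\<not> e2 < 3"
      then have "e2 * (6 * \<alpha> + 3) \<ge> 3 * (6 * \<alpha> + 3)" by (intro mult_right_mono) auto
      then show False using eq 1 by simp
    qed
    then consider "e2 = 0" | "e2 = 1" | "e2 = 2" by linarith
    then show ?thesis using eq 1 by cases (simp; presburger)+
  next
    case 2
    have "e2 = 0"
    proof (rule ccontr)
      assume "e2 \<noteq> 0"
      then have "e2 * (6 * \<alpha> + 3) \<ge> (6 * \<alpha> + 3)" by simp
      moreover have "e3 * n = n" using 2 by simp
      ultimately show False using eq assms(2) by linarith
    qed
    then show ?thesis using eq 2 assms(1) by (simp; presburger)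
  qed
qed

lemma part2:
  fixes \<alpha> n e1 e2 e3 :: nat
  assumes "\<not> (3 dvd n)" and "n > 6 * \<alpha> + 3"
    and eq: "e1 * 6 + e2 * (6 * \<alpha> + 3) + e3 * n = 3 * n"
  shows "(e1, e2, e3) = (0, 0, 3) \<or> (e3 = 0 \<and> 2 * e1 + e2 * (2 * \<alpha> + 1) = n)"
proof -
  have "e3 < 4"
  proof (rule ccontr)
    assume "\<not> e3 < 4"
    then have "e3 * n \<ge> 4 * n" by simp
    then show False using eq assms(2) by linarith
  qed
  then consider "e3 = 0" | "e3 = 1" | "e3 = 2" | "e3 = 3" by linarith
  then show ?thesis
  proof cases
    case 1
    have "3 * (2 * e1 + e2 * (2 * \<alpha> + 1)) = 3 * n" using eq 1 by (simp add: algebra_simps)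
    then show ?thesis using 1 by simp
  next
    case 2
    have "3 * (2 * e1 + e2 * (2 * \<alpha> + 1)) = 2 * n" using eq 2 by (simp add: algebra_simps)
    then show ?thesis using assms(1) by presburger
  next
    case 3
    have "3 * (2 * e1 + e2 * (2 * \<alpha> + 1)) = n" using eq 3 by (simp add: algebra_simps)
    then show ?thesis using assms(1) by presburger
  next
    case 4
    then have "e1 * 6 + e2 * (6 * \<alpha> + 3) = 0" using eq by simp
    then show ?thesis using 4 by simp
  qed
qed

theorem theorem9:
  fixes \<alpha> n :: nat
  assumes "\<not> (3 dvd n)" and "n > 6 * \<alpha> + 3"
  shows "factorizations 6 (6 * \<alpha> + 3) n (12 * \<alpha> + 6) = {(2 * \<alpha> + 1, 0, 0), (0, 2, 0)} \<and>
         factorizations 6 (6 * \<alpha> + 3) n (3 * n) =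
           {(0, 0, 3)} \<union>
           {((n - k * (2 * \<alpha> + 1)) div 2, k, 0) | k :: nat.
              k * (2 * \<alpha> + 1) \<le> n \<and> 2 dvd (n - k * (2 * \<alpha> + 1))}"
proof
  show "factorizations 6 (6 * \<alpha> + 3) n (12 * \<alpha> + 6) = {(2 * \<alpha> + 1, 0, 0), (0, 2, 0)}"
  proof
    show "factorizations 6 (6 * \<alpha> + 3) n (12 * \<alpha> + 6) \<subseteq> {(2 * \<alpha> + 1, 0, 0), (0, 2, 0)}"
      unfolding factorizations_def using part1[OF assms] by auto
    show "{(2 * \<alpha> + 1, 0, 0), (0, 2, 0)} \<subseteq> factorizations 6 (6 * \<alpha> + 3) n (12 * \<alpha> + 6)"
      unfolding factorizations_def by auto
  qed
next
  show "factorizations 6 (6 * \<alpha> + 3) n (3 * n) =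
           {(0, 0, 3)} \<union>
           {((n - k * (2 * \<alpha> + 1)) div 2, k, 0) | k :: nat.
              k * (2 * \<alpha> + 1) \<le> n \<and> 2 dvd (n - k * (2 * \<alpha> + 1))}"
  proof
    show "factorizations 6 (6 * \<alpha> + 3) n (3 * n) \<subseteq> {(0, 0, 3)} \<union>
           {((n - k * (2 * \<alpha> + 1)) div 2, k, 0) | k :: nat.
              k * (2 * \<alpha> + 1) \<le> n \<and> 2 dvd (n - k * (2 * \<alpha> + 1))}"
    proof
      fix x assume "x \<in> factorizations 6 (6 * \<alpha> + 3) n (3 * n)"
      then obtain e1 e2 e3 where x: "x = (e1, e2, e3)"
        and eq: "e1 * 6 + e2 * (6 * \<alpha> + 3) + e3 * n = 3 * n"
        unfolding factorizations_def by auto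
      from part2[OF assms eq] show "x \<in> {(0, 0, 3)} \<union>
           {((n - k * (2 * \<alpha> + 1)) div 2, k, 0) | k :: nat.
              k * (2 * \<alpha> + 1) \<le> n \<and> 2 dvd (n - k * (2 * \<alpha> + 1))}"
      proof
        assume "(e1, e2, e3) = (0, 0, 3)" then show ?thesis using x by simp
      next
        assume h: "e3 = 0 \<and> 2 * e1 + e2 * (2 * \<alpha> + 1) = n"
        then have "n - e2 * (2 * \<alpha> + 1) = 2 * e1" by linarith
        then have "x = ((n - e2 * (2 * \<alpha> + 1)) div 2, e2, 0) \<and> e2 * (2 * \<alpha> + 1) \<le> n
           \<and> 2 dvd (n - e2 * (2 * \<alpha> + 1))" using x h by auto
        then show ?thesis by blast
      qed
    qed
    show "{(0, 0, 3)} \<union>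
           {((n - k * (2 * \<alpha> + 1)) div 2, k, 0) | k :: nat.
              k * (2 * \<alpha> + 1) \<le> n \<and> 2 dvd (n - k * (2 * \<alpha> + 1))}
          \<subseteq> factorizations 6 (6 * \<alpha> + 3) n (3 * n)"
    proof
      fix x :: "nat \<times> nat \<times> nat" assume "x \<in> {(0, 0, 3)} \<union>
           {((n - k * (2 * \<alpha> + 1)) div 2, k, 0) | k :: nat.
              k * (2 * \<alpha> + 1) \<le> n \<and> 2 dvd (n - k * (2 * \<alpha> + 1))}"
      then consider "x = (0, 0, 3)" | k where "x = ((n - k * (2 * \<alpha> + 1)) div 2, k, 0)"
          "k * (2 * \<alpha> + 1) \<le> n" "2 dvd (n - k * (2 * \<alpha> + 1))" by blast
      then show "x \<in> factorizations 6 (6 * \<alpha> + 3) n (3 * n)"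
      proof cases
        case 1 then show ?thesis unfolding factorizations_def by simp
      next
        case 2
        then obtain m where m: "n - k * (2 * \<alpha> + 1) = 2 * m" by blast
        then have "n = 2 * m + k * (2 * \<alpha> + 1)" using 2(2) by linarith
        then have "m * 6 + k * (6 * \<alpha> + 3) + 0 * n = 3 * n" by (simp add: algebra_simps)
        then show ?thesis using 2(1) m unfolding factorizations_def by simp
      qed
    qed
  qed
qed

end
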